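(* Let $n\ge1$, let $\eta=\begin{pmatrix}0&1\\1&0\end{pmatrix}^{\oplus n}\in\mathbb{F}_2^{2n\times2n}$, let $\omega=J-I\in\mathbb{F}_2^{2n\times 2n}$, and let $W\in\mathbb{F}_2^{2n\times2n}$ be the upper-triangular part, including the diagonal, of the complement $J-\eta$ (i.e. $W_{ik}=(J-\eta)_{ik}$ for $i\le k$ and $W_{ik}=0$ for $i>k$). Then $\omega=W^T\eta W$ and $W^2=I$.
   Context: All arithmetic is over $\mathbb{F}_2$. $J$ denotes the $2n\times 2n$ all-ones matrix and $I$ the identity; $\oplus$ denotes block-diagonal direct sum. *)

theory Defs
  imports "HOL-Library.Z2" "Jordan_Normal_Form.Matrix"
begin

definition allones :: "nat \<Rightarrow> bit mat" where
  "allones n = mat (2*n) (2*n) (\<lambda>_. 1)"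

text \<open>eta = direct sum of n copies of [[0,1],[1,0]]: the 2x2 diagonal blocks are the
  index pairs {2k, 2k+1}; entry is 1 iff i, j lie in the same block and differ.\<close>
definition eta :: "nat \<Rightarrow> bit mat" where
  "eta n = mat (2*n) (2*n) (\<lambda>(i,j). if i div 2 = j div 2 \<and> i \<noteq> j then 1 else 0)"

definition omega :: "nat \<Rightarrow> bit mat" where
  "omega n = allones n - 1\<^sub>m (2*n)"

definition Wmat :: "nat \<Rightarrow> bit mat" where
  "Wmat n = mat (2*n) (2*n) (\<lambda>(i,k). if i \<le> k then (allones n - eta n) $$ (i,k) else 0)"

end

theory Submission
  imports Defs
begin

lemma prod_entry: "i < dim_row A \<Longrightarrow> j < dim_col B \<Longrightarrow> dim_col A = dim_row B \<Longrightarrow>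
  (A * B) $$ (i,j) = (\<Sum>l<dim_col A. A $$ (i,l) * B $$ (l,j))"
  by (simp add: scalar_prod_def lessThan_atLeast0 mult.commute)

definition w :: "nat \<Rightarrow> nat \<Rightarrow> bit" where
  "w i k = (if i \<le> k \<and> \<not> (even i \<and> k = Suc i) then 1 else 0)"

definition e :: "nat \<Rightarrow> nat \<Rightarrow> bit" where
  "e a b = (if a div 2 = b div 2 \<and> a \<noteq> b then 1 else 0)"

definition partner :: "nat \<Rightarrow> nat" where
  "partner a = (if even a then Suc a else a - 1)"

lemma W_entry: assumes "i < 2*n" "k < 2*n" shows "Wmat n $$ (i,k) = w i k"
proof -
  have h: "(i div 2 = k div 2 \<and> i \<noteq> k) = (even i \<and> k = Suc i)" if "i \<le> k" using that by presburger
  show ?thesis using assms unfolding Wmat_def allones_def eta_def w_def by (auto simp: h)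
qed

lemma eta_entry: "i < 2*n \<Longrightarrow> k < 2*n \<Longrightarrow> eta n $$ (i,k) = e i k"
  unfolding eta_def e_def by simp

lemma dims[simp]: "dim_row (Wmat n) = 2*n" "dim_col (Wmat n) = 2*n"
  "dim_row (eta n) = 2*n" "dim_col (eta n) = 2*n"
  "dim_row (omega n) = 2*n" "dim_col (omega n) = 2*n"
  by (auto simp: Wmat_def eta_def omega_def allones_def)

lemma sum_pairs: fixes f :: "nat \<Rightarrow> 'a::comm_monoid_add" shows "(\<Sum>l<2*m. f l) = (\<Sum>k<m. f (2*k) + f (2*k+1))"
  by (induction m) (auto simp: algebra_simps)

lemma partner_lt: "a < 2*n \<Longrightarrow> partner a < 2*n"
  unfolding partner_def by auto

lemma eta_row: assumes "a < 2*n" "j < 2*n"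
  shows "(\<Sum>b<2*n. e a b * w b j) = w (partner a) j"
proof -
  have "(\<Sum>b<2*n. e a b * w b j) = (\<Sum>b<2*n. if b = partner a then w b j else 0)"
    by (rule sum.cong) (auto simp: e_def partner_def elim!: evenE oddE)
  also have "\<dots> = w (partner a) j" using partner_lt[OF assms(1)] by simp
  finally show ?thesis .
qed

lemma bit_sum_cases: "(x::bit) + x = 0" by (cases x) auto

lemma term1: assumes "i = 2*p+s" "s < 2" "j = 2*q+t" "t < 2"
  shows "w (2*k) i * w (2*k+1) j + w (2*k+1) i * w (2*k) j =
    (if k = min p q then (if p = q then (if i \<noteq> j then 1 else 0) else 1) else 0)"
  using assms unfolding w_def by (cases s; cases t; auto; presburger)

lemma term2: assumes "i = 2*p+s" "s < 2" "j = 2*q+t" "t < 2"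
  shows "w i (2*k) * w (2*k) j + w i (2*k+1) * w (2*k+1) j =
    (if k = p then (if p < q \<or> i = j then 1 else 0) else 0) + (if k = q then (if p < q then 1 else 0) else 0)"
  using assms unfolding w_def by (cases s; cases t; auto; presburger)

lemma W_sq: "Wmat n * Wmat n = 1\<^sub>m (2*n)"
proof (rule eq_matI)
  fix i j assume i: "i < dim_row (1\<^sub>m (2*n) :: bit mat)" and j: "j < dim_col (1\<^sub>m (2*n) :: bit mat)"
  hence i: "i < 2*n" and j: "j < 2*n" by auto
  define p where "p = i div 2" define s where "s = i mod 2"
  define q where "q = j div 2" define t where "t = j mod 2"
  have ip: "i = 2*p+s" "s < 2" "j = 2*q+t" "t < 2" unfolding p_def s_def q_def t_def by auto
  have pn: "p < n" "q < n" using i j ip by auto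
  have "(Wmat n * Wmat n) $$ (i,j) = (\<Sum>l<2*n. w i l * w l j)"
    using i j by (subst prod_entry) (auto intro!: sum.cong simp: W_entry)
  also have "\<dots> = (\<Sum>k<n. w i (2*k) * w (2*k) j + w i (2*k+1) * w (2*k+1) j)"
    by (rule sum_pairs)
  also have "\<dots> = (\<Sum>k<n. (if k = p then (if p < q \<or> i = j then 1 else 0) else 0) + (if k = q then (if p < q then 1 else 0) else 0))"
    by (rule sum.cong[OF refl], rule term2[OF ip])
  also have "\<dots> = (if p < q \<or> i = j then 1 else 0) + (if p < q then 1 else 0)"
    using pn by (simp only: sum.distrib sum.delta lessThan_iff if_True finite_lessThan)
  also have "\<dots> = (if i = j then 1 else 0)"
    using ip by (auto simp: bit_sum_cases)
  finally show "(Wmat n * Wmat n) $$ (i,j) = 1\<^sub>m (2*n) $$ (i,j)" using i j by simp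
qed (auto)

lemma omega_eq: "omega n = transpose_mat (Wmat n) * eta n * Wmat n"
proof -
  have c: "transpose_mat (Wmat n) \<in> carrier_mat (2*n) (2*n)" "eta n \<in> carrier_mat (2*n) (2*n)"
    "Wmat n \<in> carrier_mat (2*n) (2*n)" by auto
  have assoc: "transpose_mat (Wmat n) * eta n * Wmat n = transpose_mat (Wmat n) * (eta n * Wmat n)"
    using assoc_mult_mat[OF c] .
  show ?thesis unfolding assoc
  proof (rule eq_matI)
    fix i j assume i: "i < dim_row (transpose_mat (Wmat n) * (eta n * Wmat n))"
      and j: "j < dim_col (transpose_mat (Wmat n) * (eta n * Wmat n))"
    hence i: "i < 2*n" and j: "j < 2*n" by auto
    define p where "p = i div 2" define s where "s = i mod 2"
    define q where "q = j div 2" define t where "t = j mod 2"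
    have ip: "i = 2*p+s" "s < 2" "j = 2*q+t" "t < 2" unfolding p_def s_def q_def t_def by auto
    have pn: "p < n" "q < n" using i j ip by auto
    have "(transpose_mat (Wmat n) * (eta n * Wmat n)) $$ (i,j)
        = (\<Sum>a<2*n. w a i * (\<Sum>b<2*n. e a b * w b j))"
    proof -
      have ew: "(eta n * Wmat n) $$ (a,j) = (\<Sum>b<2*n. e a b * w b j)" if "a < 2*n" for a
        using that j by (subst prod_entry) (auto intro!: sum.cong simp: W_entry eta_entry)
      show ?thesis using i j by (subst prod_entry) (auto intro!: sum.cong simp: W_entry ew index_mult_mat(2,3) simp del: index_mult_mat(1))
    qed
    also have "\<dots> = (\<Sum>a<2*n. w a i * w (partner a) j)"
      using j by (intro sum.cong refl) (simp only: eta_row lessThan_iff)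
    also have "\<dots> = (\<Sum>k<n. w (2*k) i * w (2*k+1) j + w (2*k+1) i * w (2*k) j)"
      by (subst sum_pairs, rule sum.cong[OF refl]) (simp add: partner_def)
    also have "\<dots> = (\<Sum>k<n. (if k = min p q then (if p = q then (if i \<noteq> j then 1 else 0) else 1) else 0))"
      by (rule sum.cong[OF refl], rule term1[OF ip])
    also have "\<dots> = (if p = q then (if i \<noteq> j then 1 else 0) else 1)"
      using pn by (simp only: sum.delta lessThan_iff if_True finite_lessThan min_less_iff_disj simp_thms)
    also have "\<dots> = (if i \<noteq> j then 1 else 0)"
      using ip by auto
    finally show "omega n $$ (i,j) = (transpose_mat (Wmat n) * (eta n * Wmat n)) $$ (i,j)"
      using i j by (simp add: omega_def allones_def)
  qed auto
qed

theorem mainTheorem3: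
  fixes n :: nat
  assumes "n \<ge> 1"
  shows "omega n = transpose_mat (Wmat n) * eta n * Wmat n \<and> Wmat n * Wmat n = 1\<^sub>m (2*n)"
  using omega_eq W_sq by blast

end
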